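(* Let $V$ be a finite set of nodes and let $C=\{\mathbf{t}^1,\dots,\mathbf{t}^{|C|}\}$ be a finite collection of cascades on $V$, where each cascade $\mathbf{t}^c=(t^c_v)_{v\in V}$ assigns to each node $v$ an infection time $t^c_v\in\mathbb{R}\cup\{\infty\}$ ($t^c_v=\infty$ meaning $v$ is not infected in cascade $c$). For every cascade $c$ and every ordered pair of distinct nodes $(i,j)$ with $t^c_i<t^c_j<\infty$, let $w_c(i,j)=\varepsilon^{-1} f(t^c_j\mid t^c_i;\alpha)\ge 0$, where $f(\cdot\mid\cdot;\alpha)\ge 0$ is a pairwise transmission likelihood and $\varepsilon>0$. For a directed graph $G$ on $V$, identified with its edge set $G\subseteq V\times V$, define $$F(\mathbf{t}^c\mid G)=\sum_{j\in V:\ t^c_j<\infty}\log\Big(1+\sum_{i\in V:\ (i,j)\in G,\ t^c_i<t^c_j} w_c(i,j)\Big),$$ and $F_C(\mathbf{t}^1,\dots,\mathbf{t}^{|C|}\mid G)=\sum_{c} F(\mathbf{t}^c\mid G)$. Then $G\mapsto F_C(\mathbf{t}^1,\dots,\mathbf{t}^{|C|}\mid G)$ is a submodular set function on subsets of $V\times V$, i.e., for all $A\subseteq B\subseteq V\times V$ and every $s\in (V\times V)\setminus B$, $F_C(A\cup\{s\})-F_C(A)\ge F_C(B\cup\{s\})-F_C(B)$.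
   Context: The term $1$ inside the logarithm accounts for an external source node connected to every node by an edge of likelihood $\varepsilon$ (normalized weight $\varepsilon^{-1}\varepsilon=1$), present in every graph including the empty one; thus $F_C$ of the empty graph is $0$. $F_C$ is the improvement in log-likelihood of the observed cascades under $G$ relative to the empty graph, in the model where cascades spread as directed trees over $G$ and the likelihood of a cascade sums, over all spanning trees of the infected nodes supported by $G$, the product of pairwise transmission likelihoods along tree edges. *)

theory Defs
  imports "HOL-Analysis.Analysis" "HOL-Library.Extended_Real"
begin

text \<open>A cascade on V: t v :: ereal, with t v = \<infinity> meaning v is not infected.
  The pairwise transmission likelihood f(t_j | t_i; alpha) is given as
  f tj ti (alpha fixed, absorbed into f).\<close>

definition cascade_w :: "(real \<Rightarrow> real \<Rightarrow> real) \<Rightarrow> real \<Rightarrow> ('v \<Rightarrow> ereal) \<Rightarrow> 'v \<Rightarrow> 'v \<Rightarrow> real" where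
  "cascade_w f eps t i j = f (real_of_ereal (t j)) (real_of_ereal (t i)) / eps"

definition cascade_F :: "'v set \<Rightarrow> (real \<Rightarrow> real \<Rightarrow> real) \<Rightarrow> real \<Rightarrow> ('v \<Rightarrow> ereal) \<Rightarrow> ('v \<times> 'v) set \<Rightarrow> real" where
  "cascade_F V f eps t G =
     (\<Sum>j\<in>{j\<in>V. t j < \<infinity>}.
        ln (1 + (\<Sum>i\<in>{i\<in>V. (i, j) \<in> G \<and> t i < t j}. cascade_w f eps t i j)))"

definition cascades_F :: "'v set \<Rightarrow> 'c set \<Rightarrow> (real \<Rightarrow> real \<Rightarrow> real) \<Rightarrow> real \<Rightarrow> ('c \<Rightarrow> 'v \<Rightarrow> ereal) \<Rightarrow> ('v \<times> 'v) set \<Rightarrow> real" where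
  "cascades_F V C f eps t G = (\<Sum>c\<in>C. cascade_F V f eps (t c) G)"

end

theory Submission
  imports Defs
begin

lemma ln_key:
  fixes x y w :: real
  assumes "0 \<le> x" "x \<le> y" "0 \<le> w"
  shows "ln (1+y+w) - ln (1+y) \<le> ln (1+x+w) - ln (1+x)"
proof -
  have "(1+y+w)*(1+x) \<le> (1+x+w)*(1+y)"
    using assms by (simp add: algebra_simps mult_left_mono)
  hence "ln ((1+y+w)*(1+x)) \<le> ln ((1+x+w)*(1+y))"
    using assms by (subst ln_le_cancel_iff) auto
  thus ?thesis using assms by (simp add: ln_mult)
qed

lemma inner_split:
  fixes X :: "('v \<times> 'v) set" and g :: "'v \<Rightarrow> real"
  assumes "finite V" "s \<notin> X" "s \<in> V \<times> V"
  shows "(\<Sum>i\<in>{i\<in>V. (i, j) \<in> X \<union> {s} \<and> P i}. g i)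
       = (\<Sum>i\<in>{i\<in>V. (i, j) \<in> X \<and> P i}. g i)
         + (if snd s = j \<and> P (fst s) then g (fst s) else 0)"
proof (cases "snd s = j \<and> P (fst s)")
  case True
  have eq: "{i\<in>V. (i, j) \<in> X \<union> {s} \<and> P i} = insert (fst s) {i\<in>V. (i, j) \<in> X \<and> P i}"
    using True assms by (cases s) auto
  have "fst s \<notin> {i\<in>V. (i, j) \<in> X \<and> P i}" using True assms by (cases s) auto
  hence "(\<Sum>i\<in>insert (fst s) {i\<in>V. (i, j) \<in> X \<and> P i}. g i) = g (fst s) + (\<Sum>i\<in>{i\<in>V. (i, j) \<in> X \<and> P i}. g i)"
    using assms by (intro sum.insert) auto
  thus ?thesis using True by (simp only: eq) simp
next
  case False
  have "{i\<in>V. (i, j) \<in> X \<union> {s} \<and> P i} = {i\<in>V. (i, j) \<in> X \<and> P i}"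
    using False by (cases s) auto
  thus ?thesis using False by auto
qed

theorem theorem3:
  fixes V :: "'v set" and C :: "'c set"
    and f :: "real \<Rightarrow> real \<Rightarrow> real" and eps :: real
    and t :: "'c \<Rightarrow> 'v \<Rightarrow> ereal"
    and A B :: "('v \<times> 'v) set" and s :: "'v \<times> 'v"
  assumes "finite V" and "finite C" and "eps > 0"
    and "\<And>c v. c \<in> C \<Longrightarrow> v \<in> V \<Longrightarrow> t c v \<noteq> -\<infinity>"
    and "\<And>x y. f x y \<ge> 0"
    and "A \<subseteq> B" and "B \<subseteq> V \<times> V" and "s \<in> (V \<times> V) - B"
  shows "cascades_F V C f eps t (A \<union> {s}) - cascades_F V C f eps t A
         \<ge> cascades_F V C f eps t (B \<union> {s}) - cascades_F V C f eps t B"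
proof -
  have wnn: "cascade_w f eps tt i j \<ge> 0" for tt :: "'v \<Rightarrow> ereal" and i j
    unfolding cascade_w_def using assms(3,5) by simp
  have sA: "s \<notin> A" and sB: "s \<notin> B" and sV: "s \<in> V \<times> V" using assms by auto
  let ?S = "\<lambda>tt X j. (\<Sum>i\<in>{i\<in>V. (i, j) \<in> X \<and> tt i < tt j}. cascade_w f eps tt i j)"
  let ?d = "\<lambda>tt j. (if snd s = j \<and> tt (fst s) < tt j then cascade_w f eps tt (fst s) j else 0)"
  have per_j: "ln (1 + ?S tt (B \<union> {s}) j) - ln (1 + ?S tt B j)
       \<le> ln (1 + ?S tt (A \<union> {s}) j) - ln (1 + ?S tt A j)" for tt j
  proof -
    have eA: "?S tt (A \<union> {s}) j = ?S tt A j + ?d tt j"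
      using inner_split[OF assms(1) sA sV] .
    have eB: "?S tt (B \<union> {s}) j = ?S tt B j + ?d tt j"
      using inner_split[OF assms(1) sB sV] .
    have h1: "?S tt A j \<le> ?S tt B j"
      apply (rule sum_mono2) using assms(1,6) wnn by auto
    have h0: "0 \<le> ?S tt A j" by (rule sum_nonneg) (use wnn in auto)
    have h2: "0 \<le> ?d tt j" using wnn by auto
    have "ln (1 + ?S tt B j + ?d tt j) - ln (1 + ?S tt B j) \<le> ln (1 + ?S tt A j + ?d tt j) - ln (1 + ?S tt A j)"
      by (rule ln_key[OF h0 h1 h2])
    thus ?thesis unfolding eA eB by (simp only: add.assoc)
  qed
  have per_c: "cascade_F V f eps tt (B \<union> {s}) - cascade_F V f eps tt B
      \<le> cascade_F V f eps tt (A \<union> {s}) - cascade_F V f eps tt A" for tt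
    unfolding cascade_F_def sum_subtractf[symmetric]
    by (rule sum_mono) (rule per_j)
  show ?thesis
    unfolding cascades_F_def sum_subtractf[symmetric]
    by (rule sum_mono) (rule per_c)
qed

end
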